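(* Suppose a quantum algorithm makes $T$ queries to an input $X\in\{0,1\}^N$ and accepts $X$ with probability $p(X)$. Then $\operatorname{SumInf}[p]=O(T)$, with the implied constant absolute (independent of $N$ and the algorithm).
   Context: For $p:\{0,1\}^N\to[0,1]$ and $X\in\{0,1\}^N$, $X^i$ denotes $X$ with its $i$-th bit flipped. $\operatorname{Inf}_i[p]:=\mathbb{E}_{X\in\{0,1\}^N}[|p(X)-p(X^i)|]$ (uniform $X$), and $\operatorname{SumInf}[p]:=\sum_{i=1}^N\operatorname{Inf}_i[p]$. Queries are standard quantum queries to the bits of $X$. *)

theory Defs
  imports Complex_Main
begin

text \<open>Inputs X in {0,1}^N are bool lists of length N (bit i is X ! i, 0-indexed).\<close>

definition cube :: "nat \<Rightarrow> bool list set" where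
  "cube N = {xs. length xs = N}"

definition flip :: "bool list \<Rightarrow> nat \<Rightarrow> bool list" where
  "flip X i = X[i := \<not> X ! i]"

definition Inf :: "nat \<Rightarrow> nat \<Rightarrow> (bool list \<Rightarrow> real) \<Rightarrow> real" where
  "Inf N i p = (\<Sum>X\<in>cube N. \<bar>p X - p (flip X i)\<bar>) / 2 ^ N"

definition SumInf :: "nat \<Rightarrow> (bool list \<Rightarrow> real) \<Rightarrow> real" where
  "SumInf N p = (\<Sum>i<N. Inf N i p)"

text \<open>Computational basis: |i, b, w> with query index i < N, answer bit b,
  and workspace index w < M (M arbitrary). States are amplitude functions on the basis.\<close>

type_synonym qidx = "nat \<times> bool \<times> nat"

definition qbasis :: "nat \<Rightarrow> nat \<Rightarrow> qidx set" where
  "qbasis N M = {0..<N} \<times> UNIV \<times> {0..<M}"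

text \<open>Matrices as functions (row, column); application and unitarity on a finite basis S.\<close>
definition mat_app :: "qidx set \<Rightarrow> (qidx \<Rightarrow> qidx \<Rightarrow> complex) \<Rightarrow> (qidx \<Rightarrow> complex) \<Rightarrow> (qidx \<Rightarrow> complex)" where
  "mat_app S U v = (\<lambda>j. \<Sum>k\<in>S. U j k * v k)"

definition unitary_on :: "qidx set \<Rightarrow> (qidx \<Rightarrow> qidx \<Rightarrow> complex) \<Rightarrow> bool" where
  "unitary_on S U \<longleftrightarrow>
     (\<forall>j\<in>S. \<forall>l\<in>S. (\<Sum>k\<in>S. cnj (U k j) * U k l) = (if j = l then 1 else 0))"

definition query_op :: "bool list \<Rightarrow> (qidx \<Rightarrow> complex) \<Rightarrow> (qidx \<Rightarrow> complex)" where
  "query_op X v = (\<lambda>(i, b, w). v (i, b \<noteq> X ! i, w))"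

fun run :: "qidx set \<Rightarrow> (nat \<Rightarrow> qidx \<Rightarrow> qidx \<Rightarrow> complex) \<Rightarrow> bool list \<Rightarrow> (qidx \<Rightarrow> complex) \<Rightarrow> nat \<Rightarrow> (qidx \<Rightarrow> complex)" where
  "run S Us X psi0 0 = mat_app S (Us 0) psi0"
| "run S Us X psi0 (Suc t) = mat_app S (Us (Suc t)) (query_op X (run S Us X psi0 t))"

definition acc_prob :: "nat \<Rightarrow> nat \<Rightarrow> nat \<Rightarrow> (nat \<Rightarrow> qidx \<Rightarrow> qidx \<Rightarrow> complex) \<Rightarrow> (qidx \<Rightarrow> complex) \<Rightarrow> qidx set \<Rightarrow> bool list \<Rightarrow> real" where
  "acc_prob N M T Us psi0 A X = (\<Sum>k\<in>A. (cmod (run (qbasis N M) Us X psi0 T k))\<^sup>2)"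

definition query_alg :: "nat \<Rightarrow> nat \<Rightarrow> nat \<Rightarrow> (nat \<Rightarrow> qidx \<Rightarrow> qidx \<Rightarrow> complex) \<Rightarrow> (qidx \<Rightarrow> complex) \<Rightarrow> qidx set \<Rightarrow> bool" where
  "query_alg N M T Us psi0 A \<longleftrightarrow>
     (\<forall>t\<le>T. unitary_on (qbasis N M) (Us t)) \<and>
     (\<Sum>k\<in>qbasis N M. (cmod (psi0 k))\<^sup>2) = 1 \<and>
     A \<subseteq> qbasis N M"

end

theory Submission
  imports Defs
begin


definition ip :: "qidx set \<Rightarrow> (qidx\<Rightarrow>complex) \<Rightarrow> (qidx\<Rightarrow>complex) \<Rightarrow> complex" where
  "ip S u v = (\<Sum>k\<in>S. cnj (u k) * v k)"
definition nr :: "qidx set \<Rightarrow> (qidx\<Rightarrow>complex) \<Rightarrow> real" where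
  "nr S v = (\<Sum>k\<in>S. (cmod (v k))\<^sup>2)"
definition adj :: "(qidx \<Rightarrow> qidx \<Rightarrow> complex) \<Rightarrow> (qidx \<Rightarrow> qidx \<Rightarrow> complex)" where
  "adj U = (\<lambda>j k. cnj (U k j))"

lemma ip_adj: "ip S (mat_app S U u) w = ip S u (mat_app S (adj U) w)"
proof -
  have "ip S (mat_app S U u) w = (\<Sum>j\<in>S. \<Sum>k\<in>S. cnj (U j k) * cnj (u k) * w j)"
    unfolding ip_def mat_app_def by (simp add: sum_distrib_right)
  also have "\<dots> = (\<Sum>k\<in>S. \<Sum>j\<in>S. cnj (U j k) * cnj (u k) * w j)"
    by (rule sum.swap)
  also have "\<dots> = ip S u (mat_app S (adj U) w)"
    unfolding ip_def mat_app_def adj_def by (simp add: sum_distrib_left mult_ac)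
  finally show ?thesis .
qed

lemma adj_mat_app:
  assumes "unitary_on S U" "k \<in> S" "finite S"
  shows "mat_app S (adj U) (mat_app S U v) k = v k"
proof -
  have "mat_app S (adj U) (mat_app S U v) k = (\<Sum>j\<in>S. \<Sum>l\<in>S. cnj (U j k) * U j l * v l)"
    unfolding mat_app_def adj_def by (simp add: sum_distrib_left mult_ac)
  also have "\<dots> = (\<Sum>l\<in>S. \<Sum>j\<in>S. cnj (U j k) * U j l * v l)" by (rule sum.swap)
  also have "\<dots> = (\<Sum>l\<in>S. (\<Sum>j\<in>S. cnj (U j k) * U j l) * v l)"
    by (simp add: sum_distrib_right)
  also have "\<dots> = (\<Sum>l\<in>S. (if k = l then v l else 0))"
    using assms(1,2) unfolding unitary_on_def by (intro sum.cong) auto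
  also have "\<dots> = v k" using assms by simp
  finally show ?thesis .
qed

lemma ip_unitary:
  assumes "unitary_on S U" "finite S"
  shows "ip S (mat_app S U u) (mat_app S U v) = ip S u v"
  unfolding ip_adj using adj_mat_app[OF assms(1) _ assms(2)] unfolding ip_def
  by (intro sum.cong) auto

lemma ip_self: "ip S v v = of_real (nr S v)"
  unfolding ip_def nr_def of_real_sum
  by (intro sum.cong refl) (metis complex_norm_square mult.commute)

lemma nr_nonneg: "nr S v \<ge> 0"
  unfolding nr_def by (simp add: sum_nonneg)

lemma cmod_ip_le: "cmod (ip S u v) \<le> (nr S u + nr S v) / 2"
proof -
  have "cmod (ip S u v) \<le> (\<Sum>k\<in>S. cmod (cnj (u k) * v k))"
    unfolding ip_def by (rule norm_sum)
  also have "\<dots> \<le> (\<Sum>k\<in>S. ((cmod (u k))\<^sup>2 + (cmod (v k))\<^sup>2) / 2)"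
  proof (rule sum_mono)
    fix k
    have "0 \<le> (cmod (u k) - cmod (v k))\<^sup>2" by simp
    then show "cmod (cnj (u k) * v k) \<le> ((cmod (u k))\<^sup>2 + (cmod (v k))\<^sup>2) / 2"
      by (simp add: norm_mult power2_eq_square algebra_simps)
  qed
  also have "\<dots> = (nr S u + nr S v) / 2"
    unfolding nr_def by (simp add: sum_divide_distrib[symmetric] sum.distrib)
  finally show ?thesis .
qed

lemma nr_unitary:
  assumes "unitary_on S U" "finite S"
  shows "nr S (mat_app S U v) = nr S v"
  using ip_unitary[OF assms, of v v] by (simp add: ip_self)

lemma nr_adj_le:
  assumes "unitary_on S U" "finite S"
  shows "nr S (mat_app S (adj U) w) \<le> nr S w"
proof -
  define z where "z = mat_app S (adj U) w"
  have "of_real (nr S z) = ip S (mat_app S U z) w"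
    by (simp add: ip_adj ip_self z_def)
  then have "nr S z = cmod (ip S (mat_app S U z) w)"
    by (metis norm_of_real abs_of_nonneg nr_nonneg)
  also have "\<dots> \<le> (nr S z + nr S w) / 2"
    using cmod_ip_le nr_unitary[OF assms] by metis
  finally show ?thesis unfolding z_def by simp
qed



definition sig :: "bool list \<Rightarrow> qidx \<Rightarrow> qidx" where
  "sig X k = (fst k, fst (snd k) \<noteq> X ! fst k, snd (snd k))"

lemma query_op_sig: "query_op X v = (\<lambda>k. v (sig X k))"
  unfolding query_op_def sig_def by (auto simp: fun_eq_iff split: prod.splits)

lemma sig_sig[simp]: "sig X (sig X k) = k"
  unfolding sig_def by (cases k) auto

lemma sig_mem: "k \<in> qbasis N M \<Longrightarrow> sig X k \<in> qbasis N M"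
  unfolding sig_def qbasis_def by (cases k) auto

lemma finite_qbasis[simp]: "finite (qbasis N M)"
  unfolding qbasis_def by simp

lemma sum_sig: "(\<Sum>k\<in>qbasis N M. f (sig X k)) = (\<Sum>k\<in>qbasis N M. f k)"
  by (rule sum.reindex_bij_witness[where i="sig X" and j="sig X"]) (auto simp: sig_mem)

lemma ip_query: "ip (qbasis N M) (query_op X u) v = ip (qbasis N M) u (query_op X v)"
proof -
  have "ip (qbasis N M) u (query_op X v) = (\<Sum>k\<in>qbasis N M. (\<lambda>k. cnj (u k) * v (sig X k)) (sig X k))"
    unfolding ip_def query_op_sig by (rule sum_sig[symmetric])
  then show ?thesis unfolding ip_def query_op_sig by simp
qed

lemma nr_query: "nr (qbasis N M) (query_op X v) = nr (qbasis N M) v"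
  unfolding nr_def query_op_sig using sum_sig[of "\<lambda>k. (cmod (v k))\<^sup>2"] by simp

lemma sumS: "(\<Sum>k\<in>qbasis N M. f k) = (\<Sum>j<N. \<Sum>w<M. f (j, True, w) + f (j, False, w))"
proof -
  have "(\<Sum>k\<in>qbasis N M. f k) = (\<Sum>j\<in>{0..<N}. \<Sum>bw\<in>UNIV \<times> {0..<M}. f (j, bw))"
    unfolding qbasis_def by (subst sum.cartesian_product) simp
  also have "\<dots> = (\<Sum>j\<in>{0..<N}. \<Sum>b\<in>UNIV. \<Sum>w\<in>{0..<M}. f (j, b, w))"
    by (intro sum.cong refl) (subst sum.cartesian_product, simp)
  also have "\<dots> = (\<Sum>j<N. \<Sum>w<M. f (j, True, w) + f (j, False, w))"
    by (simp add: UNIV_bool sum.distrib atLeast0LessThan add.commute)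
  finally show ?thesis .
qed

definition blk :: "nat \<Rightarrow> nat \<Rightarrow> (qidx \<Rightarrow> complex) \<Rightarrow> real" where
  "blk M i v = (\<Sum>w<M. (cmod (v (i, True, w)))\<^sup>2 + (cmod (v (i, False, w)))\<^sup>2)"

lemma nr_blk: "nr (qbasis N M) v = (\<Sum>i<N. blk M i v)"
  unfolding nr_def blk_def by (rule sumS)

lemma blk_nonneg: "blk M i v \<ge> 0"
  unfolding blk_def by (intro sum_nonneg) auto

lemma flip_flip: "i < length X \<Longrightarrow> flip (flip X i) i = X"
  unfolding flip_def by simp

lemma flip_cube: "X \<in> cube N \<Longrightarrow> flip X i \<in> cube N"
  unfolding flip_def cube_def by simp

lemma sum_flip: "i < N \<Longrightarrow> (\<Sum>X\<in>cube N. h (flip X i)) = (\<Sum>X\<in>cube N. h X)"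
  by (rule sum.reindex_bij_witness[where i="\<lambda>X. flip X i" and j="\<lambda>X. flip X i"])
     (auto simp: flip_flip flip_cube cube_def flip_def)

lemma card_cube: "card (cube N) = 2 ^ N"
proof -
  have "cube N = {xs. set xs \<subseteq> (UNIV::bool set) \<and> length xs = N}" unfolding cube_def by auto
  then show ?thesis using card_lists_length_eq[of "UNIV::bool set" N] by simp
qed

lemma finite_cube[simp]: "finite (cube N)"
proof -
  have "cube N = {xs. set xs \<subseteq> (UNIV::bool set) \<and> length xs = N}" unfolding cube_def by auto
  then show ?thesis using finite_lists_length_eq[of "UNIV::bool set" N] by simp
qed

lemma diff_bound:
  assumes i: "i < N" and X: "X \<in> cube N"
  shows "cmod (ip (qbasis N M) (query_op X phi) c - ip (qbasis N M) (query_op (flip X i) phi) c)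
          \<le> blk M i phi + blk M i c"
proof -
  let ?Y = "flip X i"
  define F where "F k = cmod ((cnj (phi (sig X k)) - cnj (phi (sig ?Y k))) * c k)" for k
  have "ip (qbasis N M) (query_op X phi) c - ip (qbasis N M) (query_op ?Y phi) c
        = (\<Sum>k\<in>qbasis N M. (cnj (phi (sig X k)) - cnj (phi (sig ?Y k))) * c k)"
    unfolding ip_def query_op_sig by (simp add: sum_subtractf algebra_simps)
  then have "cmod (ip (qbasis N M) (query_op X phi) c - ip (qbasis N M) (query_op ?Y phi) c)
        \<le> (\<Sum>k\<in>qbasis N M. F k)" unfolding F_def by (simp add: norm_sum)
  also have "\<dots> = (\<Sum>j<N. \<Sum>w<M. F (j, True, w) + F (j, False, w))" by (rule sumS)
  also have "\<dots> = (\<Sum>w<M. F (i, True, w) + F (i, False, w))"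
  proof -
    have len: "length X = N" using X unfolding cube_def by simp
    have z: "\<And>j. j \<noteq> i \<Longrightarrow> (\<Sum>w<M. F (j, True, w) + F (j, False, w)) = 0"
      unfolding F_def sig_def flip_def by simp
    show ?thesis
      using i by (subst sum.remove[of _ i]) (auto simp: z intro!: sum.neutral)
  qed
  also have "\<dots> \<le> blk M i phi + blk M i c"
    unfolding blk_def sum.distrib[symmetric]
  proof (rule sum_mono)
    fix w
    have len: "length X = N" using X unfolding cube_def by simp
    define a where "a = cmod (phi (i, True, w))"
    define b where "b = cmod (phi (i, False, w))"
    define g1 where "g1 = cmod (c (i, True, w))"
    define g0 where "g0 = cmod (c (i, False, w))"
    have Yi: "?Y ! i = (\<not> X ! i)" unfolding flip_def using i len by simp
    have Fb: "F (i, True, w) \<le> (a + b) * g1" "F (i, False, w) \<le> (a + b) * g0"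
      unfolding F_def sig_def a_def b_def g1_def g0_def using Yi
      by (cases "X ! i"; simp add: norm_mult distrib_right norm_triangle_ineq4 mult_right_mono
          del: complex_cnj_diff; metis complex_cnj_diff complex_mod_cnj norm_triangle_ineq4 distrib_right mult_right_mono norm_ge_zero add.commute)+
    have nn: "a \<ge> 0" "b \<ge> 0" "g0 \<ge> 0" "g1 \<ge> 0" by (auto simp: a_def b_def g0_def g1_def)
    have "F (i, True, w) + F (i, False, w) \<le> a\<^sup>2 + b\<^sup>2 + (g1\<^sup>2 + g0\<^sup>2)"
    proof -
      have e: "(a-g1)\<^sup>2+(a-g0)\<^sup>2+(b-g1)\<^sup>2+(b-g0)\<^sup>2 = 2*(a\<^sup>2 + b\<^sup>2 + (g1\<^sup>2 + g0\<^sup>2)) - 2*((a+b)*g1+(a+b)*g0)"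
        by (simp add: power2_eq_square algebra_simps)
      have "0 \<le> (a-g1)\<^sup>2+(a-g0)\<^sup>2+(b-g1)\<^sup>2+(b-g0)\<^sup>2" by simp
      then show ?thesis using e Fb by (smt (verit))
    qed
    then show "F (i, True, w) + F (i, False, w) \<le> (cmod (phi (i, True, w)))\<^sup>2 + (cmod (phi (i, False, w)))\<^sup>2 +
          ((cmod (c (i, True, w)))\<^sup>2 + (cmod (c (i, False, w)))\<^sup>2)"
      by (simp add: a_def b_def g0_def g1_def)
  qed
  finally show ?thesis .
qed



fun bwk :: "qidx set \<Rightarrow> (nat \<Rightarrow> qidx \<Rightarrow> qidx \<Rightarrow> complex) \<Rightarrow> nat \<Rightarrow> bool list \<Rightarrow> (qidx \<Rightarrow> complex) \<Rightarrow> nat \<Rightarrow> (qidx \<Rightarrow> complex)" where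
  "bwk S Us T X g 0 = g"
| "bwk S Us T X g (Suc k) = query_op X (mat_app S (adj (Us (T - k))) (bwk S Us T X g k))"

locale alg =
  fixes N M T :: nat and Us :: "nat \<Rightarrow> qidx \<Rightarrow> qidx \<Rightarrow> complex" and psi0 :: "qidx \<Rightarrow> complex"
    and A :: "qidx set"
  assumes qa: "query_alg N M T Us psi0 A"
begin

definition psi where "psi X t = run (qbasis N M) Us X psi0 t"
definition g where "g X = (\<lambda>k. if k \<in> A then psi X T k else 0)"
definition bw where "bw X t = bwk (qbasis N M) Us T X (g X) (T - t)"
definition c where "c X t = mat_app (qbasis N M) (adj (Us (Suc t))) (bw X (Suc t))"
definition q where "q X Y = ip (qbasis N M) (psi Y T) (g X)"

lemma unit: "t \<le> T \<Longrightarrow> unitary_on (qbasis N M) (Us t)"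
  using qa unfolding query_alg_def by auto

lemma AS: "A \<subseteq> qbasis N M" using qa unfolding query_alg_def by auto

lemma psi_Suc: "psi X (Suc t) = mat_app (qbasis N M) (Us (Suc t)) (query_op X (psi X t))"
  unfolding psi_def by simp

lemma psi_0: "psi X 0 = psi Y 0"
  unfolding psi_def by simp

lemma psi_nr: "t \<le> T \<Longrightarrow> nr (qbasis N M) (psi X t) = 1"
proof (induction t)
  case 0
  have "nr (qbasis N M) (psi X 0) = nr (qbasis N M) psi0"
    unfolding psi_def using unit[of 0] by (simp add: nr_unitary)
  also have "\<dots> = 1" using qa unfolding query_alg_def nr_def by auto
  finally show ?case .
next
  case (Suc t)
  then show ?case unfolding psi_Suc using unit[of "Suc t"] by (simp add: nr_unitary nr_query)
qed

lemma g_nr: "nr (qbasis N M) (g X) \<le> 1"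
proof -
  have "nr (qbasis N M) (g X) \<le> nr (qbasis N M) (psi X T)"
    unfolding nr_def g_def by (intro sum_mono) auto
  then show ?thesis using psi_nr[of T X] by simp
qed

lemma bwk_nr: "nr (qbasis N M) (bwk (qbasis N M) Us T X h k) \<le> nr (qbasis N M) h"
proof (induction k)
  case 0 then show ?case by simp
next
  case (Suc k)
  have "nr (qbasis N M) (bwk (qbasis N M) Us T X h (Suc k))
        = nr (qbasis N M) (mat_app (qbasis N M) (adj (Us (T - k))) (bwk (qbasis N M) Us T X h k))"
    by (simp add: nr_query)
  also have "\<dots> \<le> nr (qbasis N M) (bwk (qbasis N M) Us T X h k)"
    by (rule nr_adj_le) (auto intro: unit)
  finally show ?case using Suc by simp
qed

lemma c_nr: "t < T \<Longrightarrow> nr (qbasis N M) (c X t) \<le> 1"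
proof -
  assume t: "t < T"
  have "nr (qbasis N M) (c X t) \<le> nr (qbasis N M) (bw X (Suc t))"
    unfolding c_def by (rule nr_adj_le) (use t unit in auto)
  also have "\<dots> \<le> 1" unfolding bw_def using bwk_nr g_nr order_trans by blast
  finally show ?thesis .
qed

lemma bw_step: "t < T \<Longrightarrow> bw X t = query_op X (c X t)"
proof -
  assume t: "t < T"
  have e: "T - t = Suc (T - Suc t)" using t by simp
  have e2: "T - (T - Suc t) = Suc t" using t by simp
  show ?thesis unfolding bw_def c_def e by (simp add: e2)
qed

lemma bw_T: "bw X T = g X" unfolding bw_def by simp

lemma a_step:
  assumes t: "t < T"
  shows "ip (qbasis N M) (psi Y t) (bw X t) - ip (qbasis N M) (psi Y (Suc t)) (bw X (Suc t))
    = ip (qbasis N M) (query_op X (psi Y t)) (c X t) - ip (qbasis N M) (query_op Y (psi Y t)) (c X t)"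
  unfolding psi_Suc ip_adj bw_step[OF t] ip_query[symmetric] c_def by simp

lemma hybrid:
  "q X X - q X Y = (\<Sum>t<T. ip (qbasis N M) (query_op X (psi Y t)) (c X t)
                         - ip (qbasis N M) (query_op Y (psi Y t)) (c X t))"
proof -
  define a where "a Z t = ip (qbasis N M) (psi Z t) (bw X t)" for Z t
  have tel: "(\<Sum>t<T. a Z t - a Z (Suc t)) = a Z 0 - a Z T" for Z
    by (rule sum_lessThan_telescope')
  have sY: "(\<Sum>t<T. a Y t - a Y (Suc t)) = (\<Sum>t<T. ip (qbasis N M) (query_op X (psi Y t)) (c X t)
                         - ip (qbasis N M) (query_op Y (psi Y t)) (c X t))"
    unfolding a_def by (intro sum.cong refl) (simp add: a_step)
  have sX: "(\<Sum>t<T. a X t - a X (Suc t)) = 0"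
    unfolding a_def by (intro sum.neutral) (simp add: a_step)
  have "a X 0 = a Y 0" unfolding a_def using psi_0 by metis
  moreover have "q X X = a X T" "q X Y = a Y T" unfolding q_def a_def bw_T by simp_all
  ultimately show ?thesis using tel[of X] tel[of Y] sX sY by simp
qed

lemma q_A: "q X Y = (\<Sum>k\<in>A. cnj (psi Y T k) * psi X T k)"
proof -
  have "q X Y = (\<Sum>k\<in>qbasis N M. if k \<in> A then cnj (psi Y T k) * psi X T k else 0)"
    unfolding q_def ip_def g_def by (intro sum.cong refl) auto
  also have "\<dots> = (\<Sum>k\<in>qbasis N M \<inter> A. cnj (psi Y T k) * psi X T k)"
    by (simp add: sum.inter_restrict)
  also have "qbasis N M \<inter> A = A" using AS by auto
  finally show ?thesis .
qed

lemma q_cnj: "q Y X = cnj (q X Y)"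
  unfolding q_A by (simp add: mult.commute)

lemma p_q: "acc_prob N M T Us psi0 A X = Re (q X X)"
proof -
  have "q X X = (\<Sum>k\<in>A. of_real ((cmod (psi X T k))\<^sup>2))"
    unfolding q_A by (intro sum.cong refl) (metis complex_norm_square mult.commute)
  then show ?thesis unfolding acc_prob_def psi_def by (simp add: Re_sum)
qed

definition E where "E i X = (\<Sum>t<T. blk M i (psi X t) + blk M i (c X t))"

lemma pair_bound:
  assumes i: "i < N" and X: "X \<in> cube N"
  shows "\<bar>acc_prob N M T Us psi0 A X - acc_prob N M T Us psi0 A (flip X i)\<bar>
           \<le> E i (flip X i) + E i X"
proof -
  let ?Y = "flip X i"
  have Y: "?Y \<in> cube N" using X flip_cube by blast
  have YX: "flip ?Y i = X" using X i flip_flip unfolding cube_def by auto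
  have "acc_prob N M T Us psi0 A X - acc_prob N M T Us psi0 A ?Y
        = Re (q X X - q X ?Y) - Re (q ?Y ?Y - q ?Y X)"
    unfolding p_q using q_cnj[of ?Y X] by simp
  then have "\<bar>acc_prob N M T Us psi0 A X - acc_prob N M T Us psi0 A ?Y\<bar>
        \<le> cmod (q X X - q X ?Y) + cmod (q ?Y ?Y - q ?Y X)"
    by (smt (verit) abs_Re_le_cmod)
  also have "cmod (q X X - q X ?Y) \<le> (\<Sum>t<T. blk M i (psi ?Y t) + blk M i (c X t))"
    unfolding hybrid
    by (rule order_trans[OF norm_sum], rule sum_mono, rule diff_bound[OF i X])
  also have "cmod (q ?Y ?Y - q ?Y X) \<le> (\<Sum>t<T. blk M i (psi X t) + blk M i (c ?Y t))"
    unfolding hybrid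
    by (rule order_trans[OF norm_sum], rule sum_mono, rule diff_bound[OF i Y, unfolded YX])
  finally show ?thesis unfolding E_def by (simp add: sum.distrib)
qed

lemma E_nonneg: "E i X \<ge> 0"
  unfolding E_def by (intro sum_nonneg add_nonneg_nonneg blk_nonneg)

lemma sumE: "(\<Sum>i<N. \<Sum>X\<in>cube N. E i X) \<le> 2 * real T * card (cube N)"
proof -
  have "(\<Sum>i<N. \<Sum>X\<in>cube N. E i X) = (\<Sum>X\<in>cube N. \<Sum>t<T. \<Sum>i<N. blk M i (psi X t) + blk M i (c X t))"
  proof -
    have "(\<Sum>i<N. \<Sum>X\<in>cube N. E i X) = (\<Sum>X\<in>cube N. \<Sum>i<N. E i X)"
      by (rule sum.swap)
    also have "\<dots> = (\<Sum>X\<in>cube N. \<Sum>t<T. \<Sum>i<N. blk M i (psi X t) + blk M i (c X t))"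
      unfolding E_def by (rule sum.cong[OF refl], rule sum.swap)
    finally show ?thesis .
  qed
  also have "\<dots> = (\<Sum>X\<in>cube N. \<Sum>t<T. nr (qbasis N M) (psi X t) + nr (qbasis N M) (c X t))"
    by (simp add: nr_blk sum.distrib)
  also have "\<dots> \<le> (\<Sum>X\<in>cube N. \<Sum>t<T. 2)"
    by (intro sum_mono) (smt (verit) psi_nr c_nr lessThan_iff less_imp_le)
  also have "\<dots> = 2 * real T * card (cube N)" by simp
  finally show ?thesis .
qed

theorem main: "SumInf N (acc_prob N M T Us psi0 A) \<le> 4 * real T"
proof -
  let ?p = "acc_prob N M T Us psi0 A"
  have inf: "(\<Sum>X\<in>cube N. \<bar>?p X - ?p (flip X i)\<bar>) \<le> 2 * (\<Sum>X\<in>cube N. E i X)" if i: "i < N" for i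
  proof -
    have "(\<Sum>X\<in>cube N. \<bar>?p X - ?p (flip X i)\<bar>) \<le> (\<Sum>X\<in>cube N. E i (flip X i) + E i X)"
      by (intro sum_mono pair_bound i)
    also have "\<dots> = 2 * (\<Sum>X\<in>cube N. E i X)"
      by (simp add: sum.distrib sum_flip[OF i])
    finally show ?thesis .
  qed
  have "SumInf N ?p = (\<Sum>i<N. (\<Sum>X\<in>cube N. \<bar>?p X - ?p (flip X i)\<bar>)) / 2 ^ N"
    unfolding SumInf_def Inf_def by (simp add: sum_divide_distrib)
  also have "\<dots> \<le> (\<Sum>i<N. 2 * (\<Sum>X\<in>cube N. E i X)) / 2 ^ N"
    by (intro divide_right_mono sum_mono inf) auto
  also have "\<dots> \<le> (2 * (2 * real T * card (cube N))) / 2 ^ N"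
    using sumE by (intro divide_right_mono) (auto simp: sum_distrib_left[symmetric])
  also have "\<dots> = 4 * real T" by (simp add: card_cube)
  finally show ?thesis .
qed

end

theorem lemma19:
  shows "\<exists>C::real. \<forall>(N::nat) (M::nat) (T::nat) Us psi0 A.
           query_alg N M T Us psi0 A \<longrightarrow>
           SumInf N (acc_prob N M T Us psi0 A) \<le> C * real T"
  using alg.main unfolding alg_def by blast


end
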